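(* Let $D$ be an instance all of whose tuples are endogenous ($D^n=D$), let $\mathcal{Q}$ be a monotone query, and let $\bar a\in\mathcal{Q}(D)$. A tuple $t$ is an actual cause for $\bar a$ if and only if there is $D'\subseteq D$ with $t\in(D\smallsetminus D')\subseteq D^n$ and $(D,D',\bar a)\in\mathcal{MSSEP}^{s}(\mathcal{Q})$.
   Context: A query $\mathcal{Q}$ is monotone if $D_1\subseteq D_2$ implies $\mathcal{Q}(D_1)\subseteq\mathcal{Q}(D_2)$; $D\models\mathcal{Q}(\bar a)$ means $\bar a\in\mathcal{Q}(D)$. A tuple $\tau\in D^n$ is an actual cause for $\bar a$ if there is $\Gamma\subseteq D^n$ with $D\smallsetminus\Gamma\models\mathcal{Q}(\bar a)$ and $D\smallsetminus(\Gamma\cup\{\tau\})\not\models\mathcal{Q}(\bar a)$. $\mathcal{MSSEP}^{s}(\mathcal{Q})$ is the set of triples $(D,D',\bar a)$ with $\bar a\in\mathcal{Q}(D)$, $D'\subseteq D$, $\bar a\notin\mathcal{Q}(D')$, and $D'$ subset-maximal among subsets of $D$ with this last property. *)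

theory Defs
  imports Main
begin

text \<open>An instance is a set of tuples of type 'f; a query maps an instance to a set of
answers of type 'b. D |= Q(a) iff a \<in> Q D.\<close>

definition monotone_query :: "('f set \<Rightarrow> 'b set) \<Rightarrow> bool" where
  "monotone_query Q \<longleftrightarrow> (\<forall>D1 D2. D1 \<subseteq> D2 \<longrightarrow> Q D1 \<subseteq> Q D2)"

definition actual_cause ::
  "('f set \<Rightarrow> 'b set) \<Rightarrow> 'f set \<Rightarrow> 'f set \<Rightarrow> 'b \<Rightarrow> 'f \<Rightarrow> bool" where
  "actual_cause Q D Dn a \<tau> \<longleftrightarrow> \<tau> \<in> Dn \<and>
     (\<exists>\<Gamma>. \<Gamma> \<subseteq> Dn \<and> a \<in> Q (D - \<Gamma>) \<and> a \<notin> Q (D - (\<Gamma> \<union> {\<tau>})))"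

definition MSSEP_s :: "('f set \<Rightarrow> 'b set) \<Rightarrow> ('f set \<times> 'f set \<times> 'b) set" where
  "MSSEP_s Q = {(D, D', a). a \<in> Q D \<and> D' \<subseteq> D \<and> a \<notin> Q D' \<and>
     (\<forall>D''. D' \<subseteq> D'' \<and> D'' \<subseteq> D \<and> a \<notin> Q D'' \<longrightarrow> D'' = D')}"

end

theory Submission
  imports Defs
begin

theorem proposition10:
  fixes Q :: "'f set \<Rightarrow> 'b set" and D Dn :: "'f set" and a :: 'b and t :: 'f
  assumes "finite D"
    and "Dn = D"
    and "monotone_query Q"
    and "a \<in> Q D"
  shows "actual_cause Q D Dn a t \<longleftrightarrow>
           (\<exists>D'. D' \<subseteq> D \<and> t \<in> D - D' \<and> D - D' \<subseteq> Dn \<and> (D, D', a) \<in> MSSEP_s Q)"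
proof
  assume "actual_cause Q D Dn a t"
  then obtain \<Gamma> where tD: "t \<in> D" and G: "\<Gamma> \<subseteq> D" and q1: "a \<in> Q (D - \<Gamma>)"
    and q2: "a \<notin> Q (D - (\<Gamma> \<union> {t}))"
    using assms(2) unfolding actual_cause_def by auto
  define S where "S = {D''. D - (\<Gamma> \<union> {t}) \<subseteq> D'' \<and> D'' \<subseteq> D \<and> a \<notin> Q D''}"
  have fS: "finite S" 
  proof (rule finite_subset)
    show "S \<subseteq> Pow D" unfolding S_def by auto
    show "finite (Pow D)" using assms(1) by simp
  qed
  have neS: "S \<noteq> {}" using q2 unfolding S_def by auto
  obtain D' where D'S: "D' \<in> S" and mx: "\<forall>X\<in>S. card X \<le> card D'"
  proof -
    have "finite (card ` S)" "card ` S \<noteq> {}" using fS neS by auto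
    then have "Max (card ` S) \<in> card ` S" by (rule Max_in)
    then obtain D' where "D' \<in> S" "card D' = Max (card ` S)" by auto
    moreover have "\<forall>X\<in>S. card X \<le> Max (card ` S)" using fS by auto
    ultimately show ?thesis using that by auto
  qed
  have notin: "\<And>X. X \<in> S \<Longrightarrow> t \<notin> X"
  proof
    fix X assume "X \<in> S" "t \<in> X"
    hence "D - \<Gamma> \<subseteq> X" "a \<notin> Q X" unfolding S_def by auto
    thus False using q1 assms(3) unfolding monotone_query_def by blast
  qed
  have "(D, D', a) \<in> MSSEP_s Q"
    unfolding MSSEP_s_def
  proof (simp only: mem_Collect_eq case_prod_conv, intro conjI allI impI)
    show "a \<in> Q D" by fact
    show "D' \<subseteq> D" "a \<notin> Q D'" using D'S unfolding S_def by auto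
    fix D'' assume h: "D' \<subseteq> D'' \<and> D'' \<subseteq> D \<and> a \<notin> Q D''"
    hence "D'' \<in> S" using D'S unfolding S_def by auto
    hence "card D'' \<le> card D'" using mx by auto
    moreover have "finite D''" using h assms(1) finite_subset by blast
    ultimately show "D'' = D'" using h card_seteq by blast
  qed
  moreover have "D' \<subseteq> D" using D'S unfolding S_def by simp
  moreover have "t \<notin> D'" using D'S notin by simp
  ultimately have "D' \<subseteq> D \<and> t \<in> D - D' \<and> D - D' \<subseteq> Dn \<and> (D, D', a) \<in> MSSEP_s Q"
    using tD assms(2) by simp
  then show "\<exists>D'. D' \<subseteq> D \<and> t \<in> D - D' \<and> D - D' \<subseteq> Dn \<and> (D, D', a) \<in> MSSEP_s Q"
    by (rule exI)
next
  assume "\<exists>D'. D' \<subseteq> D \<and> t \<in> D - D' \<and> D - D' \<subseteq> Dn \<and> (D, D', a) \<in> MSSEP_s Q"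
  then obtain D' where s: "D' \<subseteq> D" and t: "t \<in> D" "t \<notin> D'" and M: "(D, D', a) \<in> MSSEP_s Q"
    by auto
  from M have n: "a \<notin> Q D'" and mx: "\<And>X. D' \<subseteq> X \<Longrightarrow> X \<subseteq> D \<Longrightarrow> a \<notin> Q X \<Longrightarrow> X = D'"
    unfolding MSSEP_s_def by auto
  define G where "G = D - D' - {t}"
  have e1: "D - G = insert t D'" using s t unfolding G_def by auto
  have e2: "D - (G \<union> {t}) = D'" using s t unfolding G_def by auto
  have "a \<in> Q (insert t D')" using mx[of "insert t D'"] s t by auto
  thus "actual_cause Q D Dn a t" unfolding actual_cause_def
    using e1 e2 n t assms(2) by (intro conjI exI[of _ G]) (auto simp: G_def)
qed

end
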